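(* Let $G\leq \mathrm{Aut}(X^* )$ be finitely generated and just infinite, strongly self-replicating, and with the congruence subgroup property. Let $Y$ be a spanning leaf set and $L\le G$. If $\mathrm{st}_L(Y)$ is an infra-direct product of $G^Y$, then $L$ is finitely generated.
   Context: Let $X$ be a finite set and $X^*$ the free monoid on $X$, identified with the rooted tree in which the children of $w$ are the words $wx$. $X^n$ is the set of words of length $n$; $\mathrm{Aut}(X^* )$ the group of prefix-preserving bijections of $X^*$. For $g\in\mathrm{Aut}(X^* )$, $u\in X^*$ the section $g_u$ is defined by $g(uw)=g(u)g_u(w)$; $\psi_u(g)=g_u$, $\psi_u(S)=\{g_u:g\in S\}$. For $G\le\mathrm{Aut}(X^* )$: $\mathrm{st}_G(x)$ vertex stabilizer, $\mathrm{st}_G(Y)=\bigcap_{y\in Y}\mathrm{st}_G(y)$, $\mathrm{st}_G(n)=\mathrm{st}_G(X^n)$. A leaf set is a finite $Y\subseteq X^*$ no element of which is a prefix of another; spanning if there is $N$ such that every word of length $\ge N$ has a prefix in $Y$. $G^Y$ is the group of automorphisms acting as an element of $G$ below each $y\in Y$ and trivially elsewhere. $\mathrm{st}_L(Y)$ is an infra-direct product of $G^Y$ if $\psi_y(\mathrm{st}_L(Y))$ is a finite index subgroup of $G$ for every $y\in Y$. $G$ is strongly self-replicating if $g_x\in G$ for all $g\in G,x\in X^*$ and $\psi_x(\mathrm{st}_G(n))=G$ for all $n\ge1$, $x\in X^n$. Just infinite: infinite with every proper quotient finite. Congruence subgroup property: every finite index subgroup contains $\mathrm{st}_G(n)$ for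 some $n$. *)

theory Defs
  imports "HOL-Library.Sublist" "HOL-Algebra.Group" "HOL-Algebra.Coset" "HOL-Algebra.Generated_Groups"
begin

text \<open>The alphabet X is a finite type 'a; the free monoid X* is 'a list, ordered by prefix.
  Aut(X*) = prefix-preserving bijections of X*.\<close>

definition is_aut :: "('a list \<Rightarrow> 'a list) \<Rightarrow> bool" where
  "is_aut f \<longleftrightarrow> bij f \<and> (\<forall>u v. prefix u v \<longleftrightarrow> prefix (f u) (f v))"

definition autgroup :: "('a list \<Rightarrow> 'a list) monoid" where
  "autgroup = \<lparr>carrier = {f. is_aut f}, mult = (\<circ>), one = id\<rparr>"

definition grp :: "('a list \<Rightarrow> 'a list) set \<Rightarrow> ('a list \<Rightarrow> 'a list) monoid" where
  "grp H = autgroup\<lparr>carrier := H\<rparr>"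

text \<open>Section g_u, defined by g(uw) = g(u) g_u(w).\<close>
definition section_at :: "('a list \<Rightarrow> 'a list) \<Rightarrow> 'a list \<Rightarrow> ('a list \<Rightarrow> 'a list)" where
  "section_at g u = (\<lambda>w. drop (length u) (g (u @ w)))"

definition psi :: "'a list \<Rightarrow> ('a list \<Rightarrow> 'a list) set \<Rightarrow> ('a list \<Rightarrow> 'a list) set" where
  "psi u S = (\<lambda>g. section_at g u) ` S"

definition level :: "nat \<Rightarrow> 'a list set" where
  "level n = {w. length w = n}"

definition stab_set :: "('a list \<Rightarrow> 'a list) set \<Rightarrow> 'a list set \<Rightarrow> ('a list \<Rightarrow> 'a list) set" where
  "stab_set G Y = {g \<in> G. \<forall>y\<in>Y. g y = y}"

definition stab_level :: "('a list \<Rightarrow> 'a list) set \<Rightarrow> nat \<Rightarrow> ('a list \<Rightarrow> 'a list) set" where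
  "stab_level G n = stab_set G (level n)"

definition finite_index :: "('a list \<Rightarrow> 'a list) set \<Rightarrow> ('a list \<Rightarrow> 'a list) set \<Rightarrow> bool" where
  "finite_index H G \<longleftrightarrow> finite (rcosets\<^bsub>grp G\<^esub> H)"

definition fin_gen :: "('a list \<Rightarrow> 'a list) set \<Rightarrow> bool" where
  "fin_gen G \<longleftrightarrow> (\<exists>S. finite S \<and> S \<subseteq> G \<and> generate autgroup S = G)"

definition just_infinite :: "('a list \<Rightarrow> 'a list) set \<Rightarrow> bool" where
  "just_infinite G \<longleftrightarrow> infinite G \<and>
     (\<forall>N. N \<lhd> grp G \<and> N \<noteq> {id} \<longrightarrow> finite_index N G)"

definition strongly_self_replicating :: "('a list \<Rightarrow> 'a list) set \<Rightarrow> bool" where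
  "strongly_self_replicating G \<longleftrightarrow>
     (\<forall>g\<in>G. \<forall>x. section_at g x \<in> G) \<and>
     (\<forall>n\<ge>1. \<forall>x. length x = n \<longrightarrow> psi x (stab_level G n) = G)"

definition congruence_subgroup_property :: "('a list \<Rightarrow> 'a list) set \<Rightarrow> bool" where
  "congruence_subgroup_property G \<longleftrightarrow>
     (\<forall>H. subgroup H (grp G) \<and> finite_index H G \<longrightarrow> (\<exists>n. stab_level G n \<subseteq> H))"

definition leaf_set :: "'a list set \<Rightarrow> bool" where
  "leaf_set Y \<longleftrightarrow> finite Y \<and> (\<forall>y\<in>Y. \<forall>z\<in>Y. prefix y z \<longrightarrow> y = z)"

definition spanning :: "'a list set \<Rightarrow> bool" where
  "spanning Y \<longleftrightarrow> (\<exists>N. \<forall>w. length w \<ge> N \<longrightarrow> (\<exists>y\<in>Y. prefix y w))"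

definition infra_direct :: "('a list \<Rightarrow> 'a list) set \<Rightarrow> ('a list \<Rightarrow> 'a list) set \<Rightarrow> 'a list set \<Rightarrow> bool" where
  "infra_direct G L Y \<longleftrightarrow>
     (\<forall>y\<in>Y. subgroup (psi y (stab_set L Y)) (grp G) \<and> finite_index (psi y (stab_set L Y)) G)"

end

theory Submission
  imports Defs
begin

definition fgen :: "('g, 'b) monoid_scheme \<Rightarrow> 'g set \<Rightarrow> bool" where
  "fgen G X \<longleftrightarrow> (\<exists>S. finite S \<and> S \<subseteq> X \<and> generate G S = X)"

lemma finite_image_factor:
  assumes "finite (g ` X)" and "\<And>x y. x \<in> X \<Longrightarrow> y \<in> X \<Longrightarrow> g x = g y \<Longrightarrow> f x = f y"
  shows "finite (f ` X)"
proof -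
  have "f ` X = (\<lambda>v. f (SOME x. x \<in> X \<and> g x = v)) ` (g ` X)"
  proof (intro equalityI subsetI)
    fix z assume "z \<in> f ` X"
    then obtain x where x: "x \<in> X" "z = f x" by auto
    have "\<exists>x'. x' \<in> X \<and> g x' = g x" using x by auto
    then have "(SOME x'. x' \<in> X \<and> g x' = g x) \<in> X \<and> g (SOME x'. x' \<in> X \<and> g x' = g x) = g x"
      by (rule someI_ex)
    then have "f (SOME x'. x' \<in> X \<and> g x' = g x) = f x" using assms(2) x by metis
    then show "z \<in> (\<lambda>v. f (SOME x. x \<in> X \<and> g x = v)) ` (g ` X)" using x by force
  next
    fix z assume "z \<in> (\<lambda>v. f (SOME x. x \<in> X \<and> g x = v)) ` (g ` X)"
    then obtain x where x: "x \<in> X" "z = f (SOME x'. x' \<in> X \<and> g x' = g x)" by auto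
    have "\<exists>x'. x' \<in> X \<and> g x' = g x" using x by auto
    then have "(SOME x'. x' \<in> X \<and> g x' = g x) \<in> X"
      by (metis (mono_tags, lifting) someI_ex)
    then show "z \<in> f ` X" using x by auto
  qed
  then show ?thesis using assms(1) by simp
qed

context group
begin

lemma fg_ext:
  assumes A: "subgroup A G" and img: "\<phi> ` A \<subseteq> carrier G"
    and hom: "\<And>a b. a \<in> A \<Longrightarrow> b \<in> A \<Longrightarrow> \<phi> (a \<otimes> b) = \<phi> a \<otimes> \<phi> b"
    and fi: "fgen G (\<phi> ` A)" and fk: "fgen G {a\<in>A. \<phi> a = \<one>}"
  shows "fgen G A"
proof -
  have Ac: "A \<subseteq> carrier G" using subgroup.subset[OF A] .
  have p1: "\<phi> \<one> = \<one>"
  proof -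
    have o: "\<one> \<in> A" using subgroup.one_closed[OF A] .
    have c: "\<phi> \<one> \<in> carrier G" using img o by auto
    have "\<phi> \<one> \<otimes> \<phi> \<one> = \<phi> \<one> \<otimes> \<one>" using hom[OF o o, symmetric] c by simp
    then show ?thesis using c by (simp add: Units_eq)
  qed
  have pinv: "\<phi> (inv a) = inv (\<phi> a)" if a: "a \<in> A" for a
  proof -
    have ia: "inv a \<in> A" using subgroup.m_inv_closed[OF A a] .
    have ac: "a \<in> carrier G" using a Ac by auto
    have e: "\<phi> a \<otimes> \<phi> (inv a) = \<one>"
    proof -
      have "\<phi> a \<otimes> \<phi> (inv a) = \<phi> (a \<otimes> inv a)" using hom[OF a ia] by simp
      also have "\<dots> = \<phi> \<one>" using ac by simp
      finally show ?thesis using p1 by simp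
    qed
    have c1: "\<phi> a \<in> carrier G" and c2: "\<phi> (inv a) \<in> carrier G" using img a ia by auto
    show ?thesis using inv_equality[OF inv_comm[OF e c1 c2] c1 c2] by simp
  qed
  obtain SC where SC: "finite SC" "SC \<subseteq> \<phi> ` A" "generate G SC = \<phi> ` A" using fi unfolding fgen_def by blast
  obtain SN where SN: "finite SN" "SN \<subseteq> {a\<in>A. \<phi> a = \<one>}" "generate G SN = {a\<in>A. \<phi> a = \<one>}"
    using fk unfolding fgen_def by blast
  define pre where "pre = (\<lambda>c. SOME a. a \<in> A \<and> \<phi> a = c)"
  have pre: "pre c \<in> A \<and> \<phi> (pre c) = c" if "c \<in> \<phi> ` A" for c
  proof -
    have "\<exists>a. a \<in> A \<and> \<phi> a = c" using that by auto
    then show ?thesis unfolding pre_def by (rule someI_ex)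
  qed
  define S where "S = pre ` SC \<union> SN"
  have Sfin: "finite S" using SC SN S_def by auto
  have SA: "S \<subseteq> A" using pre SC SN S_def by auto
  define T where "T = generate G S"
  have TA: "T \<subseteq> A" unfolding T_def using generate_subgroup_incl[OF SA A] .
  have claim: "\<exists>t\<in>T. \<phi> t = c" if "c \<in> generate G SC" for c
    using that
  proof (induction rule: generate.induct)
    case one then show ?case using p1 T_def generate.one by blast
  next
    case (incl h)
    then have "pre h \<in> S" "\<phi> (pre h) = h" using pre SC S_def by auto
    then have "pre h \<in> T" "\<phi> (pre h) = h" unfolding T_def using generate.incl[of "pre h" S G] by auto
    then show ?case by blast
  next
    case (inv h)
    then have "pre h \<in> S" "pre h \<in> A" "\<phi> (pre h) = h" using pre SC S_def by auto
    then have "inv (pre h) \<in> T" "\<phi> (inv (pre h)) = inv h" using T_def generate.inv pinv by auto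
    then show ?case by blast
  next
    case (eng h1 h2)
    then obtain t1 t2 where "t1 \<in> T" "\<phi> t1 = h1" "t2 \<in> T" "\<phi> t2 = h2" by blast
    moreover have "t1 \<in> A" "t2 \<in> A" using TA \<open>t1 \<in> T\<close> \<open>t2 \<in> T\<close> by auto
    ultimately have "t1 \<otimes> t2 \<in> T" "\<phi> (t1 \<otimes> t2) = h1 \<otimes> h2" using T_def generate.eng hom by auto
    then show ?case by blast
  qed
  have "A \<subseteq> T"
  proof
    fix a assume a: "a \<in> A"
    then obtain t where t: "t \<in> T" "\<phi> t = \<phi> a" using claim SC(3) by auto
    have tA: "t \<in> A" using t TA by auto
    have ac: "a \<in> carrier G" "t \<in> carrier G" using a tA Ac by auto
    have k: "a \<otimes> inv t \<in> A" using subgroup.m_closed[OF A a subgroup.m_inv_closed[OF A tA]] .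
    have "\<phi> (a \<otimes> inv t) = \<phi> a \<otimes> inv (\<phi> t)" 
    proof -
      have "inv t \<in> A" using subgroup.m_inv_closed[OF A tA] .
      then show ?thesis using hom[OF a] pinv[OF tA] by simp
    qed
    also have "\<dots> = \<one>" using t img a by auto
    finally have "a \<otimes> inv t \<in> generate G SN" using k SN by auto
    then have "a \<otimes> inv t \<in> T" 
    proof -
      have "generate G SN \<subseteq> generate G S" using mono_generate[of SN S] S_def by auto
      then show ?thesis using \<open>a \<otimes> inv t \<in> generate G SN\<close> T_def by auto
    qed
    then have "(a \<otimes> inv t) \<otimes> t \<in> T" using t(1) unfolding T_def by (rule generate.eng)
    then show "a \<in> T" using ac by (simp add: m_assoc)
  qed
  then have "generate G S = A" using TA T_def by auto
  then show ?thesis unfolding fgen_def using Sfin SA by auto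
qed

end

context group
begin

lemma rcos_elem:
  assumes H: "subgroup H G" and x: "x \<in> carrier G" and y: "y \<in> carrier G" and e: "H #> x = H #> y"
  shows "\<exists>h\<in>H. x = h \<otimes> y"
proof -
  have "x \<in> H #> x" using rcos_self[OF x H] .
  then have "x \<in> H #> y" using e by simp
  then show ?thesis unfolding r_coset_def by auto
qed

lemma fg_up:
  assumes K: "subgroup K G" and B: "subgroup B G" and KB: "K \<subseteq> B" and fK: "fgen G K"
    and fin: "finite ((\<lambda>b. K #> b) ` B)"
  shows "fgen G B"
proof -
  obtain SK where SK: "finite SK" "SK \<subseteq> K" "generate G SK = K" using fK unfolding fgen_def by auto
  have Bc: "B \<subseteq> carrier G" using subgroup.subset[OF B] .
  define rp where "rp C = (SOME b. b \<in> B \<and> C = K #> b)" for C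
  have rpB: "rp (K #> b) \<in> B \<and> K #> b = K #> rp (K #> b)" if b: "b \<in> B" for b
  proof -
    have "\<exists>b'. b' \<in> B \<and> K #> b = K #> b'" using b by auto
    then show ?thesis unfolding rp_def by (rule someI_ex)
  qed
  define R where "R = rp ` ((\<lambda>b. K #> b) ` B)"
  define S where "S = SK \<union> R"
  have Sfin: "finite S" unfolding S_def R_def using SK fin by auto
  have SB: "S \<subseteq> B" unfolding S_def R_def using SK KB rpB by auto
  have "B \<subseteq> generate G S"
  proof
    fix b assume b: "b \<in> B"
    let ?r = "rp (K #> b)"
    have r: "?r \<in> B" "K #> b = K #> ?r" using rpB[OF b] by auto
    obtain k where k: "k \<in> K" "b = k \<otimes> ?r" using rcos_elem[OF K _ _ r(2)] b r(1) Bc by auto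
    have "k \<in> generate G S" using k(1) SK(3) mono_generate[of SK S] S_def by auto
    moreover have "?r \<in> generate G S" using generate.incl[of ?r S G] b S_def R_def by auto
    ultimately have "k \<otimes> ?r \<in> generate G S" by (rule generate.eng)
    then show "b \<in> generate G S" using k by simp
  qed
  then have "generate G S = B" using generate_subgroup_incl[OF SB B] by auto
  then show ?thesis unfolding fgen_def using Sfin SB by auto
qed

lemma finite_index_Int:
  assumes H: "subgroup H G" and C: "subgroup C G" and CB: "C \<subseteq> B"
    and fin: "finite ((\<lambda>b. H #> b) ` B)"
  shows "finite ((\<lambda>c. (H \<inter> C) #> c) ` C)"
proof (rule finite_image_factor)
  show "finite ((\<lambda>b. H #> b) ` C)" using fin CB by (meson finite_subset image_mono)
next
  fix c c' assume c: "c \<in> C" and c': "c' \<in> C" and e: "H #> c = H #> c'"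
  have Cc: "C \<subseteq> carrier G" using subgroup.subset[OF C] .
  have HC: "subgroup (H \<inter> C) G" using subgroups_Inter_pair[OF H C] .
  obtain h where h: "h \<in> H" "c = h \<otimes> c'" using rcos_elem[OF H _ _ e] c c' Cc by auto
  have hc: "h \<in> carrier G" using h(1) subgroup.subset[OF H] by auto
  have "h = c \<otimes> inv c'" using h c' Cc hc by (simp add: m_assoc subsetD)
  then have "h \<in> C" using subgroup.m_closed[OF C c subgroup.m_inv_closed[OF C c']] by simp
  then have hHC: "h \<in> H \<inter> C" using h by auto
  have "(H \<inter> C) #> c = ((H \<inter> C) #> h) #> c'"
    using h(2) coset_mult_assoc[of "H \<inter> C" h c'] hc c' Cc subgroup.subset[OF HC] by auto
  also have "\<dots> = (H \<inter> C) #> c'" using subgroup.rcos_const[OF HC is_group hHC] by simp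
  finally show "(H \<inter> C) #> c = (H \<inter> C) #> c'" .
qed

end

context group
begin

lemma schreier:
  assumes H: "subgroup H G" and B: "subgroup B G" and HB: "H \<subseteq> B" and fB: "fgen G B"
    and fin: "finite ((\<lambda>b. H #> b) ` B)"
  shows "fgen G H"
proof -
  obtain SB where SB: "finite SB" "SB \<subseteq> B" "generate G SB = B" using fB unfolding fgen_def by auto
  have Bc: "B \<subseteq> carrier G" using subgroup.subset[OF B] .
  have Hc: "H \<subseteq> carrier G" using subgroup.subset[OF H] .
  have B1: "\<one> \<in> B" using subgroup.one_closed[OF B] .
  define r where "r C = (if C = H then \<one> else SOME b. b \<in> B \<and> C = H #> b)" for C
  define rep where "rep x = r (H #> x)" for x
  have H1: "H #> \<one> = H" using coset_mult_one[OF Hc] .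
  have rep_prop: "rep x \<in> B \<and> H #> rep x = H #> x" if x: "x \<in> B" for x
  proof (cases "H #> x = H")
    case True
    then show ?thesis unfolding rep_def r_def using B1 H1 by simp
  next
    case False
    have "\<exists>b. b \<in> B \<and> H #> x = H #> b" using x by auto
    then have "(SOME b. b \<in> B \<and> H #> x = H #> b) \<in> B \<and> H #> x = H #> (SOME b. b \<in> B \<and> H #> x = H #> b)"
      by (rule someI_ex)
    then show ?thesis unfolding rep_def r_def using False by simp
  qed
  have repc: "rep x \<in> carrier G" if "x \<in> B" for x using rep_prop[OF that] Bc by auto
  define T where "T = r ` ((\<lambda>b. H #> b) ` B)"
  have Tfin: "finite T" unfolding T_def using fin by simp
  have repT: "rep x \<in> T" if "x \<in> B" for x unfolding T_def rep_def using that by auto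
  have TB: "T \<subseteq> B" unfolding T_def using rep_prop unfolding rep_def by auto
  have rep_T: "rep t = t" if t: "t \<in> T" for t
  proof -
    obtain b where b: "b \<in> B" "t = rep b" using t unfolding T_def rep_def by auto
    have "H #> t = H #> b" using rep_prop[OF b(1)] b(2) by simp
    then show ?thesis using b(2) unfolding rep_def by simp
  qed
  have one_T: "\<one> \<in> T" using repT[OF B1] unfolding rep_def r_def using H1 by simp
  have repH: "rep h = \<one>" if "h \<in> H" for h
    using subgroup.rcos_const[OF H is_group that] unfolding rep_def r_def by simp
  have inH: "x \<otimes> inv (rep x) \<in> H" if x: "x \<in> B" for x
  proof -
    have e: "H #> x = H #> rep x" using rep_prop[OF x] by simp
    obtain h where h: "h \<in> H" "x = h \<otimes> rep x" using rcos_elem[OF H _ _ e] x Bc repc[OF x] by auto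
    have hc: "h \<in> carrier G" using h(1) Hc by auto
    have "x \<otimes> inv (rep x) = (h \<otimes> rep x) \<otimes> inv (rep x)"
      using arg_cong[OF h(2), of "\<lambda>z. z \<otimes> inv (rep x)"] .
    also have "\<dots> = h" using hc repc[OF x] by (simp add: m_assoc)
    finally have "x \<otimes> inv (rep x) = h" .
    then show ?thesis using h by simp
  qed
  have repm: "rep (rep x \<otimes> y) = rep (x \<otimes> y)" if x: "x \<in> B" and y: "y \<in> B" for x y
  proof -
    have "H #> (rep x \<otimes> y) = (H #> rep x) #> y" using coset_mult_assoc[OF Hc repc[OF x]] y Bc by auto
    also have "\<dots> = (H #> x) #> y" using rep_prop[OF x] by simp
    also have "\<dots> = H #> (x \<otimes> y)" using coset_mult_assoc[OF Hc] x y Bc by auto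
    finally show ?thesis unfolding rep_def by simp
  qed
  define SB' where "SB' = SB \<union> (\<lambda>s. inv s) ` SB"
  have SB'B: "SB' \<subseteq> B" unfolding SB'_def using SB(2) subgroup.m_inv_closed[OF B] by auto
  define gens where "gens = (\<lambda>(t, s). t \<otimes> s \<otimes> inv (rep (t \<otimes> s))) ` (T \<times> SB')"
  have gfin: "finite gens" unfolding gens_def SB'_def using Tfin SB(1) by auto
  have gH: "gens \<subseteq> H"
  proof
    fix z assume "z \<in> gens"
    then obtain t s where ts: "t \<in> T" "s \<in> SB'" "z = t \<otimes> s \<otimes> inv (rep (t \<otimes> s))" unfolding gens_def by auto
    have "t \<otimes> s \<in> B" using subgroup.m_closed[OF B] ts TB SB'B by auto
    then show "z \<in> H" using inH ts(3) by simp
  qed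
  have claim: "\<forall>t\<in>T. t \<otimes> g \<otimes> inv (rep (t \<otimes> g)) \<in> generate G gens" if g: "g \<in> generate G SB" for g
    using g
  proof (induction rule: generate.induct)
    case one
    show ?case
    proof
      fix t assume t: "t \<in> T"
      have tc: "t \<in> carrier G" using t TB Bc by auto
      have "t \<otimes> \<one> \<otimes> inv (rep (t \<otimes> \<one>)) = \<one>" using tc rep_T[OF t] by simp
      then show "t \<otimes> \<one> \<otimes> inv (rep (t \<otimes> \<one>)) \<in> generate G gens" using generate.one[of G gens] by simp
    qed
  next
    case (incl h)
    show ?case
    proof
      fix t assume t: "t \<in> T"
      have "(t, h) \<in> T \<times> SB'" using t incl SB'_def by auto
      then have "t \<otimes> h \<otimes> inv (rep (t \<otimes> h)) \<in> gens" unfolding gens_def by force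
      then show "t \<otimes> h \<otimes> inv (rep (t \<otimes> h)) \<in> generate G gens" by (rule generate.incl)
    qed
  next
    case (inv h)
    show ?case
    proof
      fix t assume t: "t \<in> T"
      have "(t, inv h) \<in> T \<times> SB'" using t inv SB'_def by auto
      then have "t \<otimes> inv h \<otimes> inv (rep (t \<otimes> inv h)) \<in> gens" unfolding gens_def by force
      then show "t \<otimes> inv h \<otimes> inv (rep (t \<otimes> inv h)) \<in> generate G gens" by (rule generate.incl)
    qed
  next
    case (eng g1 g2)
    show ?case
    proof
      fix t assume t: "t \<in> T"
      have g1B: "g1 \<in> B" and g2B: "g2 \<in> B" using eng.hyps SB(3) by auto
      have tB: "t \<in> B" using t TB by auto
      have tg1: "t \<otimes> g1 \<in> B" using subgroup.m_closed[OF B tB g1B] .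
      define u where "u = rep (t \<otimes> g1)"
      have uT: "u \<in> T" using repT[OF tg1] u_def by simp
      have uB: "u \<in> B" using uT TB by auto
      have i1: "t \<otimes> g1 \<otimes> inv u \<in> generate G gens" using eng.IH(1) t u_def by auto
      have i2: "u \<otimes> g2 \<otimes> inv (rep (u \<otimes> g2)) \<in> generate G gens" using eng.IH(2) uT by auto
      have w: "rep (u \<otimes> g2) = rep (t \<otimes> (g1 \<otimes> g2))"
        using repm[OF tg1 g2B] u_def tB g1B g2B Bc by (simp add: m_assoc subsetD)
      have wc: "rep (u \<otimes> g2) \<in> carrier G" using repc subgroup.m_closed[OF B uB g2B] by simp
      have c: "t \<in> carrier G" "g1 \<in> carrier G" "g2 \<in> carrier G" "u \<in> carrier G" using tB g1B g2B uB Bc by auto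
      have "(t \<otimes> g1 \<otimes> inv u) \<otimes> (u \<otimes> g2 \<otimes> inv (rep (u \<otimes> g2))) = t \<otimes> (g1 \<otimes> g2) \<otimes> inv (rep (u \<otimes> g2))"
      proof -
        have z: "g2 \<otimes> inv (rep (u \<otimes> g2)) \<in> carrier G" using c wc by simp
        have "inv u \<otimes> (u \<otimes> (g2 \<otimes> inv (rep (u \<otimes> g2)))) = g2 \<otimes> inv (rep (u \<otimes> g2))"
          using c z by (simp add: m_assoc[symmetric])
        then show ?thesis using c wc by (simp add: m_assoc)
      qed
      moreover have "(t \<otimes> g1 \<otimes> inv u) \<otimes> (u \<otimes> g2 \<otimes> inv (rep (u \<otimes> g2))) \<in> generate G gens"
        using i1 i2 by (rule generate.eng)
      ultimately show "t \<otimes> (g1 \<otimes> g2) \<otimes> inv (rep (t \<otimes> (g1 \<otimes> g2))) \<in> generate G gens" using w by simp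
    qed
  qed
  have "H \<subseteq> generate G gens"
  proof
    fix h assume h: "h \<in> H"
    have hB: "h \<in> generate G SB" using h HB SB(3) by auto
    have "\<one> \<otimes> h \<otimes> inv (rep (\<one> \<otimes> h)) \<in> generate G gens" using claim[OF hB] one_T by auto
    moreover have "\<one> \<otimes> h \<otimes> inv (rep (\<one> \<otimes> h)) = h" using h Hc repH[OF h] by (simp add: subsetD)
    ultimately show "h \<in> generate G gens" by simp
  qed
  then have "generate G gens = H" using generate_subgroup_incl[OF gH H] by auto
  then show ?thesis unfolding fgen_def using gfin gH by auto
qed

end

lemma prefix_eq_len: "prefix a c \<Longrightarrow> prefix b c \<Longrightarrow> length a = length b \<Longrightarrow> a = b"
  by (metis prefix_length_prefix prefix_order.antisym order_refl)

lemma is_aut_id: "is_aut id"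
  unfolding is_aut_def by auto

lemma is_aut_comp: "is_aut f \<Longrightarrow> is_aut g \<Longrightarrow> is_aut (f \<circ> g)"
  unfolding is_aut_def by (auto intro: bij_comp)

lemma is_aut_inv: assumes "is_aut f" shows "is_aut (inv_into UNIV f)" "inv_into UNIV f \<circ> f = id"
proof -
  have b: "bij f" using assms is_aut_def by auto
  show "inv_into UNIV f \<circ> f = id" using b by (simp add: bij_is_inj)
  have "prefix u v \<longleftrightarrow> prefix (inv_into UNIV f u) (inv_into UNIV f v)" for u v
  proof -
    have "prefix (inv_into UNIV f u) (inv_into UNIV f v) \<longleftrightarrow> prefix (f (inv_into UNIV f u)) (f (inv_into UNIV f v))" using assms is_aut_def by blast
    also have "\<dots> \<longleftrightarrow> prefix u v" using b by (simp add: bij_is_surj surj_f_inv_f)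
    finally show ?thesis by simp
  qed
  then show "is_aut (inv_into UNIV f)" unfolding is_aut_def using b bij_imp_bij_inv by blast
qed

lemma autgroup_simps [simp]: "carrier autgroup = {f. is_aut f}" "mult autgroup = (\<circ>)" "one autgroup = id"
  by (auto simp: autgroup_def)

lemma group_autgroup: "group autgroup"
proof (rule groupI)
  show "\<exists>y\<in>carrier autgroup. y \<otimes>\<^bsub>autgroup\<^esub> x = \<one>\<^bsub>autgroup\<^esub>" if "x \<in> carrier autgroup" for x
    using that is_aut_inv by force
qed (auto simp: is_aut_id is_aut_comp comp_assoc)

interpretation AG: group autgroup by (rule group_autgroup)

abbreviation ainv where "ainv g \<equiv> m_inv autgroup g"

lemma ainv_aut: "is_aut g \<Longrightarrow> is_aut (ainv g)"
  using AG.inv_closed by auto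

lemma ainv_r: "is_aut g \<Longrightarrow> g \<circ> ainv g = id"
  using AG.r_inv[of g] by simp

lemma ainv_l: "is_aut g \<Longrightarrow> ainv g \<circ> g = id"
  using AG.l_inv[of g] by simp

lemma ainv_fix: assumes "is_aut g" "g x = x" shows "ainv g x = x"
proof -
  have "ainv g (g x) = x" using ainv_l[OF assms(1)] by (metis comp_apply id_apply)
  then show ?thesis using assms(2) by simp
qed

lemma aut_nil: assumes "is_aut f" shows "f [] = []"
proof -
  obtain u where u: "f u = []" using assms unfolding is_aut_def by (metis bij_pointE)
  have "prefix (f []) (f u)" using assms unfolding is_aut_def by auto
  then show ?thesis using u by simp
qed

lemma card_prefixes_set: "card {v. prefix v u} = length u + 1"
proof -
  have "{v. prefix v u} = set (prefixes u)" by auto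
  then show ?thesis using distinct_card[OF distinct_prefixes] by simp
qed

lemma aut_length: assumes "is_aut f" shows "length (f u) = length u"
proof -
  have b: "bij f" and p: "\<And>u v. prefix u v \<longleftrightarrow> prefix (f u) (f v)" using assms is_aut_def by auto
  have "f ` {v. prefix v u} = {w. prefix w (f u)}"
  proof (intro equalityI subsetI)
    fix w assume "w \<in> f ` {v. prefix v u}" then show "w \<in> {w. prefix w (f u)}" using p by auto
  next
    fix w assume w: "w \<in> {w. prefix w (f u)}"
    obtain v where v: "w = f v" using b by (metis bij_pointE)
    then have "prefix v u" using p w by auto
    then show "w \<in> f ` {v. prefix v u}" using v by auto
  qed
  moreover have "inj_on f {v. prefix v u}" using b bij_is_inj inj_on_subset by blast
  ultimately have "card {w. prefix w (f u)} = card {v. prefix v u}" using card_image by metis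
  then show ?thesis using card_prefixes_set[of u] card_prefixes_set[of "f u"] by simp
qed

lemma aut_append: assumes "is_aut f" shows "f (v @ w) = f v @ section_at f v w"
proof -
  have "prefix (f v) (f (v @ w))" using assms unfolding is_aut_def by auto
  then obtain z where z: "f (v @ w) = f v @ z" by (auto simp: prefix_def)
  have "length (f v) = length v" using aut_length[OF assms] .
  then show ?thesis using z unfolding section_at_def by simp
qed

lemma section_comp: assumes "is_aut g" "is_aut h"
  shows "section_at (g \<circ> h) v = section_at g (h v) \<circ> section_at h v"
proof
  fix w
  have "(g \<circ> h) (v @ w) = g (h v) @ section_at g (h v) (section_at h v w)"
    using aut_append[OF assms(2)] aut_append[OF assms(1)] by simp
  moreover have "length (g (h v)) = length v" using aut_length assms by metis
  ultimately show "section_at (g \<circ> h) v w = (section_at g (h v) \<circ> section_at h v) w"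
    unfolding section_at_def[of "g \<circ> h"] by simp
qed

lemma section_comp_fix: assumes "is_aut g" "is_aut h" "h v = v"
  shows "section_at (g \<circ> h) v = section_at g v \<circ> section_at h v"
  using section_comp[OF assms(1,2)] assms(3) by simp

lemma section_id [simp]: "section_at id v = id"
  unfolding section_at_def by auto

lemma section_section: "section_at (section_at g u) w = section_at g (u @ w)"
  unfolding section_at_def by (auto simp: add.commute)

lemma section_aut: assumes a: "is_aut g" shows "is_aut (section_at g v)"
proof -
  let ?h = "section_at g v"
  have b: "bij g" and p: "\<And>u v. prefix u v \<longleftrightarrow> prefix (g u) (g v)" using a is_aut_def by auto
  have ap: "g (v @ w) = g v @ ?h w" for w using aut_append[OF a] .
  have inj: "inj ?h"
  proof (rule injI)
    fix w w' assume "?h w = ?h w'"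
    then have "g (v @ w) = g (v @ w')" using ap by simp
    then show "w = w'" using b bij_is_inj by (metis inj_eq same_append_eq)
  qed
  have surj: "surj ?h" unfolding surj_def
  proof
    fix z
    obtain u where u: "g u = g v @ z" using b by (metis bij_pointE)
    have "prefix (g v) (g u)" using u by simp
    then have "prefix v u" using p by blast
    then obtain w where w: "u = v @ w" by (auto simp: prefix_def)
    have "?h w = z" using ap[of w] u w by simp
    then show "\<exists>w. z = ?h w" by auto
  qed
  have "prefix w w' \<longleftrightarrow> prefix (?h w) (?h w')" for w w'
  proof -
    have "prefix w w' \<longleftrightarrow> prefix (v @ w) (v @ w')" by simp
    also have "\<dots> \<longleftrightarrow> prefix (g (v @ w)) (g (v @ w'))" using p by blast
    also have "\<dots> \<longleftrightarrow> prefix (?h w) (?h w')" using ap by simp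
    finally show ?thesis .
  qed
  then show ?thesis unfolding is_aut_def using inj surj bij_def by blast
qed

lemma aut_fix_long: assumes a: "is_aut g" and l: "\<And>u. length u \<ge> N \<Longrightarrow> g u = u" shows "g = id"
proof
  fix u :: "'a list"
  define u' where "u' = u @ replicate (N - length u) undefined"
  have "length u' \<ge> N" unfolding u'_def by simp
  then have gu': "g u' = u'" using l by simp
  have "prefix u u'" unfolding u'_def by simp
  then have "prefix (g u) u'" using a gu' unfolding is_aut_def by metis
  moreover have "prefix u u'" unfolding u'_def by simp
  moreover have "length (g u) = length u" using aut_length[OF a] .
  ultimately show "g u = id u" using prefix_eq_len by simp
qed

lemma aut_fix_short: assumes a: "is_aut g" and l: "\<And>u. length u = m \<Longrightarrow> g u = u" and "length u \<le> m"
  shows "g u = u"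
proof -
  define u' where "u' = u @ replicate (m - length u) undefined"
  have "length u' = m" unfolding u'_def using assms(3) by simp
  then have gu': "g u' = u'" using l by simp
  have "prefix u u'" unfolding u'_def by simp
  then have "prefix (g u) u'" using a gu' unfolding is_aut_def by metis
  moreover have "prefix u u'" unfolding u'_def by simp
  moreover have "length (g u) = length u" using aut_length[OF a] .
  ultimately show "g u = u" by (metis prefix_eq_len)
qed

lemma finite_level: "finite (level n :: ('a::finite) list set)"
proof -
  have "level n = {xs :: 'a list. set xs \<subseteq> UNIV \<and> length xs = n}" unfolding level_def by auto
  then show ?thesis using finite_lists_length_eq[of "UNIV :: 'a set" n] by simp
qed

lemma rcosets_grp: "rcosets\<^bsub>grp B\<^esub> H = (\<lambda>b. H #>\<^bsub>autgroup\<^esub> b) ` B"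
  by (auto simp: RCOSETS_def r_coset_def grp_def autgroup_def)

lemma fin_gen_iff: "fin_gen X = fgen autgroup X"
  by (simp add: fin_gen_def fgen_def)

lemma grp_carrier [simp]: "carrier (grp G) = G"
  by (simp add: grp_def autgroup_def)

lemma sub_of_grp: assumes G: "subgroup G autgroup" and X: "subgroup X (grp G)"
  shows "subgroup X autgroup" "X \<subseteq> G"
proof -
  have gG: "group (grp G)" unfolding grp_def using AG.subgroup_imp_group[OF G] .
  show XG: "X \<subseteq> G" using subgroup.subset[OF X] by simp
  have "group ((grp G)\<lparr>carrier := X\<rparr>)" using group.subgroup_imp_group[OF gG X] .
  then have "group (autgroup\<lparr>carrier := X\<rparr>)" by (simp add: grp_def)
  moreover have "X \<subseteq> carrier autgroup" using XG subgroup.subset[OF G] by auto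
  ultimately show "subgroup X autgroup" using AG.group_incl_imp_subgroup by blast
qed

lemma grp_sub: assumes "subgroup G autgroup" "subgroup X autgroup" "X \<subseteq> G"
  shows "subgroup X (grp G)"
  unfolding grp_def using AG.subgroup_incl[OF assms(2,1,3)] .

lemma stab_subgroup: assumes H: "subgroup H autgroup" shows "subgroup (stab_set H Z) autgroup"
proof (rule AG.subgroupI)
  show "stab_set H Z \<subseteq> carrier autgroup" using subgroup.subset[OF H] unfolding stab_set_def by auto
  show "stab_set H Z \<noteq> {}" using subgroup.one_closed[OF H] unfolding stab_set_def by auto
next
  fix a assume a: "a \<in> stab_set H Z"
  have aH: "a \<in> H" and ac: "is_aut a" using a subgroup.subset[OF H] unfolding stab_set_def by auto
  show "ainv a \<in> stab_set H Z" using a subgroup.m_inv_closed[OF H aH] ainv_fix[OF ac]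
    unfolding stab_set_def by auto
next
  fix a b assume "a \<in> stab_set H Z" "b \<in> stab_set H Z"
  then show "a \<otimes>\<^bsub>autgroup\<^esub> b \<in> stab_set H Z" using subgroup.m_closed[OF H, of a b]
    unfolding stab_set_def by auto
qed

lemma stab_fin:
  assumes H: "subgroup H autgroup" and Z: "finite (Z :: ('a::finite) list set)"
  shows "finite ((\<lambda>b. stab_set H Z #>\<^bsub>autgroup\<^esub> b) ` H)"
proof (rule finite_image_factor[where g = "\<lambda>b. restrict (ainv b) Z"])
  have Hc: "\<And>b. b \<in> H \<Longrightarrow> is_aut b" using subgroup.subset[OF H] by auto
  have "(\<lambda>b. restrict (ainv b) Z) ` H \<subseteq> (\<Pi>\<^sub>E z\<in>Z. (level (length z) :: 'a list set))"
    using Hc ainv_aut aut_length unfolding level_def by fastforce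
  moreover have "finite (\<Pi>\<^sub>E z\<in>Z. (level (length z) :: 'a list set))" by (rule finite_PiE) (auto simp: Z finite_level)
  ultimately show "finite ((\<lambda>b. restrict (ainv b) Z) ` H)" by (rule finite_subset)
next
  fix b b' assume b: "b \<in> H" and b': "b' \<in> H" and e: "restrict (ainv b) Z = restrict (ainv b') Z"
  have ab: "is_aut b" "is_aut b'" using b b' subgroup.subset[OF H] by auto
  let ?S = "stab_set H Z"
  have S: "subgroup ?S autgroup" using stab_subgroup[OF H] .
  have d: "b \<circ> ainv b' \<in> ?S"
  proof -
    have "b \<circ> ainv b' \<in> H" using subgroup.m_closed[OF H b subgroup.m_inv_closed[OF H b']] by simp
    moreover have "(b \<circ> ainv b') z = z" if z: "z \<in> Z" for z
    proof -
      have "ainv b' z = ainv b z" using e z by (metis restrict_apply')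
      then show ?thesis using ainv_r[OF ab(1)] by (metis comp_apply id_apply)
    qed
    ultimately show ?thesis unfolding stab_set_def by auto
  qed
  have "b = (b \<circ> ainv b') \<circ> b'" using ainv_l[OF ab(2)] by (simp add: comp_assoc)
  then have "?S #>\<^bsub>autgroup\<^esub> b = (?S #>\<^bsub>autgroup\<^esub> (b \<circ> ainv b')) #>\<^bsub>autgroup\<^esub> b'"
    using AG.coset_mult_assoc[of ?S "b \<circ> ainv b'" b'] subgroup.subset[OF S] d ab by auto
  also have "\<dots> = ?S #>\<^bsub>autgroup\<^esub> b'" using subgroup.rcos_const[OF S group_autgroup d] by simp
  finally show "?S #>\<^bsub>autgroup\<^esub> b = ?S #>\<^bsub>autgroup\<^esub> b'" .
qed

lemma stab_level_mono: assumes G: "subgroup G autgroup" shows "stab_level G (Suc n) \<subseteq> stab_level G n"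
proof
  fix g assume g: "g \<in> stab_level G (Suc n)"
  have a: "is_aut g" "g \<in> G" using g subgroup.subset[OF G] unfolding stab_level_def stab_set_def by auto
  have "g u = u" if "length u = n" for u
    using aut_fix_short[OF a(1), of "Suc n" u] g that unfolding stab_level_def stab_set_def level_def by auto
  then show "g \<in> stab_level G n" using a unfolding stab_level_def stab_set_def level_def by auto
qed

lemma sec_inv: assumes a: "is_aut a" and x: "a x = x"
  shows "ainv (section_at a x) = section_at (ainv a) x"
proof -
  have ai: "is_aut (ainv a)" using ainv_aut[OF a] .
  have "section_at a x \<circ> section_at (ainv a) x = section_at (a \<circ> ainv a) x"
    using section_comp_fix[OF a ai ainv_fix[OF a x]] by simp
  also have "\<dots> = id" using ainv_r[OF a] by simp
  finally have st: "section_at a x \<otimes>\<^bsub>autgroup\<^esub> section_at (ainv a) x = \<one>\<^bsub>autgroup\<^esub>" by simp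
  have c: "section_at a x \<in> carrier autgroup" "section_at (ainv a) x \<in> carrier autgroup"
    using section_aut a ai by auto
  show ?thesis using AG.inv_equality[OF AG.inv_comm[OF st c] c] .
qed

lemma psi_subgroup: assumes E: "subgroup E autgroup" and fx: "\<And>e. e \<in> E \<Longrightarrow> e x = x"
  shows "subgroup (psi x E) autgroup"
proof (rule AG.subgroupI)
  have Ec: "\<And>e. e \<in> E \<Longrightarrow> is_aut e" using subgroup.subset[OF E] by auto
  show "psi x E \<subseteq> carrier autgroup" unfolding psi_def using Ec section_aut by auto
  show "psi x E \<noteq> {}" unfolding psi_def using subgroup.one_closed[OF E] by auto
next
  have Ec: "\<And>e. e \<in> E \<Longrightarrow> is_aut e" using subgroup.subset[OF E] by auto
  fix a assume "a \<in> psi x E"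
  then obtain e where e: "e \<in> E" "a = section_at e x" unfolding psi_def by auto
  have "ainv a = section_at (ainv e) x" using sec_inv[OF Ec[OF e(1)] fx[OF e(1)]] e(2) by simp
  moreover have "ainv e \<in> E" using subgroup.m_inv_closed[OF E e(1)] .
  ultimately show "ainv a \<in> psi x E" unfolding psi_def by auto
next
  have Ec: "\<And>e. e \<in> E \<Longrightarrow> is_aut e" using subgroup.subset[OF E] by auto
  fix a b assume "a \<in> psi x E" "b \<in> psi x E"
  then obtain e e' where e: "e \<in> E" "a = section_at e x" "e' \<in> E" "b = section_at e' x" unfolding psi_def by auto
  have "a \<circ> b = section_at (e \<circ> e') x" using section_comp_fix[OF Ec[OF e(1)] Ec[OF e(3)] fx[OF e(3)]] e by simp
  moreover have "e \<circ> e' \<in> E" using subgroup.m_closed[OF E e(1) e(3)] by simp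
  ultimately show "a \<otimes>\<^bsub>autgroup\<^esub> b \<in> psi x E" unfolding psi_def by auto
qed

lemma fgen_triv: "fgen autgroup {id}"
  unfolding fgen_def using AG.generate_empty by (intro exI[of _ "{}"]) auto

lemma A_sub:
  fixes E :: "('a list \<Rightarrow> 'a list) set" and xs :: "'a list list"
  assumes E: "subgroup E autgroup" and fx: "\<And>e x. e \<in> E \<Longrightarrow> x \<in> set xs \<Longrightarrow> e x = x"
    and j: "j \<le> length xs"
  shows "subgroup {e\<in>E. \<forall>i<j. section_at e (xs!i) = id} autgroup"
proof -
  define A where "A j = {e\<in>E. \<forall>i<j. section_at e (xs!i) = id}" for j
  have Ec: "\<And>e. e \<in> E \<Longrightarrow> is_aut e" using subgroup.subset[OF E] by auto
  have "subgroup (A j) autgroup"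
  proof (rule AG.subgroupI)
    show "A j \<subseteq> carrier autgroup" unfolding A_def using Ec by auto
    show "A j \<noteq> {}" unfolding A_def using subgroup.one_closed[OF E] by auto
  next
    fix a assume a: "a \<in> A j"
    have aE: "a \<in> E" using a A_def by auto
    have "section_at (ainv a) (xs!i) = id" if i: "i < j" for i
    proof -
      have x: "xs!i \<in> set xs" using i j by auto
      have "section_at (a \<circ> ainv a) (xs!i) = section_at a (xs!i) \<circ> section_at (ainv a) (xs!i)"
        using section_comp_fix[OF Ec[OF aE] ainv_aut[OF Ec[OF aE]] ainv_fix[OF Ec[OF aE] fx[OF aE x]]] .
      then show ?thesis using ainv_r[OF Ec[OF aE]] a i unfolding A_def by simp
    qed
    then show "ainv a \<in> A j" unfolding A_def using subgroup.m_inv_closed[OF E aE] by auto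
  next
    fix a b assume a: "a \<in> A j" and b: "b \<in> A j"
    have aE: "a \<in> E" and bE: "b \<in> E" using a b A_def by auto
    have "section_at (a \<circ> b) (xs!i) = id" if i: "i < j" for i
    proof -
      have x: "xs!i \<in> set xs" using i j by auto
      have "section_at (a \<circ> b) (xs!i) = section_at a (xs!i) \<circ> section_at b (xs!i)"
        using section_comp_fix[OF Ec[OF aE] Ec[OF bE] fx[OF bE x]] .
      then show ?thesis using a b i unfolding A_def by simp
    qed
    then show "a \<otimes>\<^bsub>autgroup\<^esub> b \<in> A j" unfolding A_def using subgroup.m_closed[OF E aE bE] by auto
  qed
  then show ?thesis unfolding A_def .
qed

lemma chain:
  fixes E :: "('a list \<Rightarrow> 'a list) set" and xs :: "'a list list"
  assumes E: "subgroup E autgroup" and fx: "\<And>e x. e \<in> E \<Longrightarrow> x \<in> set xs \<Longrightarrow> e x = x"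
    and triv: "\<And>e. e \<in> E \<Longrightarrow> \<forall>x\<in>set xs. section_at e x = id \<Longrightarrow> e = id"
    and step: "\<And>j. j < length xs \<Longrightarrow> fgen autgroup (psi (xs!j) {e\<in>E. \<forall>i<j. section_at e (xs!i) = id})"
  shows "fgen autgroup E"
proof -
  define A where "A j = {e\<in>E. \<forall>i<j. section_at e (xs!i) = id}" for j
  have Ec: "\<And>e. e \<in> E \<Longrightarrow> is_aut e" using subgroup.subset[OF E] by auto
  have Asub: "subgroup (A j) autgroup" if j: "j \<le> length xs" for j
    unfolding A_def using A_sub[of E xs j] E fx j by blast
  have Alen: "A (length xs) = {id}"
  proof -
    have "A (length xs) \<subseteq> {id}"
    proof
      fix e assume "e \<in> A (length xs)"
      then have e: "e \<in> E" "\<forall>i<length xs. section_at e (xs!i) = id" unfolding A_def by auto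
      then have "\<forall>x\<in>set xs. section_at e x = id" by (metis in_set_conv_nth)
      then show "e \<in> {id}" using triv[OF e(1)] by simp
    qed
    moreover have "id \<in> A (length xs)" unfolding A_def using subgroup.one_closed[OF E] by auto
    ultimately show ?thesis by auto
  qed
  have ind: "k \<le> length xs \<Longrightarrow> fgen autgroup (A (length xs - k))" for k
  proof (induction k)
    case 0 then show ?case using Alen fgen_triv by simp
  next
    case (Suc k)
    define j where "j = length xs - Suc k"
    have j: "j < length xs" "Suc j = length xs - k" using Suc.prems j_def by auto
    have x: "xs!j \<in> set xs" using j by auto
    have IH: "fgen autgroup (A (Suc j))" using Suc j by simp
    have "fgen autgroup (A j)"
    proof (rule AG.fg_ext[where \<phi> = "\<lambda>e. section_at e (xs!j)"])
      show "subgroup (A j) autgroup" using Asub j by simp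
      show "(\<lambda>e. section_at e (xs!j)) ` A j \<subseteq> carrier autgroup"
        unfolding A_def using Ec section_aut by auto
      show "section_at (a \<otimes>\<^bsub>autgroup\<^esub> b) (xs!j) = section_at a (xs!j) \<otimes>\<^bsub>autgroup\<^esub> section_at b (xs!j)"
        if "a \<in> A j" "b \<in> A j" for a b
      proof -
        have "a \<in> E" "b \<in> E" using that unfolding A_def by auto
        then show ?thesis using section_comp_fix[OF Ec[of a] Ec[of b] fx[of b, OF _ x]] by simp
      qed
      show "fgen autgroup ((\<lambda>e. section_at e (xs!j)) ` A j)"
        using step[OF j(1)] unfolding psi_def A_def by simp
      have "{a \<in> A j. section_at a (xs!j) = \<one>\<^bsub>autgroup\<^esub>} = A (Suc j)"
        unfolding A_def by (auto simp: less_Suc_eq)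
      then show "fgen autgroup {a \<in> A j. section_at a (xs!j) = \<one>\<^bsub>autgroup\<^esub>}" using IH by simp
    qed
    then show ?case using j_def by simp
  qed
  have "A 0 = E" unfolding A_def by auto
  then show ?thesis using ind[of "length xs"] by simp
qed

lemma conj_section: assumes s: "is_aut s" and e: "is_aut e" and sy: "s y = y" and ey: "e y = y"
  shows "section_at (s \<circ> e \<circ> ainv s) y = section_at s y \<circ> section_at e y \<circ> ainv (section_at s y)"
proof -
  have ai: "is_aut (ainv s)" using ainv_aut[OF s] .
  have se: "is_aut (s \<circ> e)" using is_aut_comp[OF s e] .
  have "section_at (s \<circ> e \<circ> ainv s) y = section_at (s \<circ> e) y \<circ> section_at (ainv s) y"
    using section_comp_fix[OF se ai ainv_fix[OF s sy]] .
  also have "\<dots> = section_at s y \<circ> section_at e y \<circ> section_at (ainv s) y"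
    using section_comp_fix[OF s e ey] by simp
  also have "\<dots> = section_at s y \<circ> section_at e y \<circ> ainv (section_at s y)"
    using sec_inv[OF s sy] by simp
  finally show ?thesis .
qed

lemma key:
  fixes G E :: "('a::finite list \<Rightarrow> 'a list) set"
  assumes G: "subgroup G autgroup" and fG: "fgen autgroup G" and ji: "just_infinite G"
    and ssr: "strongly_self_replicating G" and m: "m \<ge> 1"
    and E: "subgroup E autgroup" and EG: "E \<subseteq> stab_level G m"
    and nrm: "\<And>s e. s \<in> stab_level G m \<Longrightarrow> e \<in> E \<Longrightarrow> s \<circ> e \<circ> ainv s \<in> E"
  shows "fgen autgroup E"
proof -
  obtain xs where xs: "set xs = (level m :: 'a list set)" using finite_list[OF finite_level] by blast
  have sG: "\<And>g x. g \<in> G \<Longrightarrow> section_at g x \<in> G" using ssr unfolding strongly_self_replicating_def by auto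
  have sr: "\<And>x. length x = m \<Longrightarrow> psi x (stab_level G m) = G"
    using ssr m unfolding strongly_self_replicating_def by auto
  have Gc: "\<And>g. g \<in> G \<Longrightarrow> is_aut g" using subgroup.subset[OF G] by auto
  have stG: "\<And>s. s \<in> stab_level G m \<Longrightarrow> s \<in> G" unfolding stab_level_def stab_set_def by auto
  have stfix: "\<And>s x. s \<in> stab_level G m \<Longrightarrow> x \<in> set xs \<Longrightarrow> s x = x"
    using xs unfolding stab_level_def stab_set_def by auto
  have Ec: "\<And>e. e \<in> E \<Longrightarrow> is_aut e" using EG stG Gc by auto
  have fx: "\<And>e x. e \<in> E \<Longrightarrow> x \<in> set xs \<Longrightarrow> e x = x" using EG stfix by auto
  show ?thesis
  proof (rule chain[of E xs])
    show "subgroup E autgroup" using E .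
    show "\<And>e x. e \<in> E \<Longrightarrow> x \<in> set xs \<Longrightarrow> e x = x" using fx by blast
  next
    fix e assume e: "e \<in> E" and tr: "\<forall>x\<in>set xs. section_at e x = id"
    show "e = id"
    proof (rule aut_fix_long[OF Ec[OF e], of m])
      fix u :: "'a list" assume u: "m \<le> length u"
      have t: "take m u \<in> set xs" using xs u unfolding level_def by auto
      have "e u = e (take m u @ drop m u)" by simp
      also have "\<dots> = e (take m u) @ section_at e (take m u) (drop m u)" using aut_append[OF Ec[OF e]] .
      also have "\<dots> = u" using fx[OF e t] tr t by simp
      finally show "e u = u" .
    qed
  next
    fix j assume j: "j < length xs"
    define A where "A = {e\<in>E. \<forall>i<j. section_at e (xs!i) = id}"
    define x where "x = xs!j"
    have x: "x \<in> set xs" using j x_def by auto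
    have xl: "length x = m" using x xs unfolding level_def by auto
    have Asub: "subgroup A autgroup" unfolding A_def using A_sub[of E xs j] E fx j by simp
    have AE: "A \<subseteq> E" unfolding A_def by auto
    define C where "C = psi x A"
    have Csub: "subgroup C autgroup" unfolding C_def using psi_subgroup[OF Asub] fx x AE by auto
    have CG: "C \<subseteq> G" unfolding C_def psi_def using AE EG stG sG by blast
    have Cn: "g \<circ> c \<circ> ainv g \<in> C" if g: "g \<in> G" and c: "c \<in> C" for g c
    proof -
      obtain s where s: "s \<in> stab_level G m" "section_at s x = g" using sr[OF xl] g unfolding psi_def by force
      obtain e where e: "e \<in> A" "c = section_at e x" using c unfolding C_def psi_def by auto
      have eE: "e \<in> E" using e AE by auto
      have sa: "is_aut s" using s(1) stG Gc by auto
      have e'E: "s \<circ> e \<circ> ainv s \<in> E" using nrm[OF s(1) eE] .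
      have "section_at (s \<circ> e \<circ> ainv s) (xs!i) = id" if i: "i < j" for i
      proof -
        have xi: "xs!i \<in> set xs" using i j by auto
        have "section_at (s \<circ> e \<circ> ainv s) (xs!i) = section_at s (xs!i) \<circ> section_at e (xs!i) \<circ> ainv (section_at s (xs!i))"
          using conj_section[OF sa Ec[OF eE] stfix[OF s(1) xi] fx[OF eE xi]] .
        also have "\<dots> = section_at s (xs!i) \<circ> ainv (section_at s (xs!i))" using e(1) i unfolding A_def by simp
        also have "\<dots> = id" using ainv_r[OF section_aut[OF sa]] by simp
        finally show ?thesis .
      qed
      then have e'A: "s \<circ> e \<circ> ainv s \<in> A" unfolding A_def using e'E by auto
      have "section_at (s \<circ> e \<circ> ainv s) x = g \<circ> c \<circ> ainv g"
        using conj_section[OF sa Ec[OF eE] stfix[OF s(1) x] fx[OF eE x]] s(2) e(2) by simp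
      then show ?thesis using e'A unfolding C_def psi_def by force
    qed
    have gG: "group (grp G)" unfolding grp_def using AG.subgroup_imp_group[OF G] .
    have "C \<lhd> grp G"
    proof (rule group.normal_invI[OF gG])
      show "subgroup C (grp G)" using grp_sub[OF G Csub CG] .
      fix g c assume g: "g \<in> carrier (grp G)" and c: "c \<in> C"
      have "inv\<^bsub>grp G\<^esub> g = ainv g" unfolding grp_def using AG.m_inv_consistent[OF G] g by simp
      then show "g \<otimes>\<^bsub>grp G\<^esub> c \<otimes>\<^bsub>grp G\<^esub> inv\<^bsub>grp G\<^esub> g \<in> C" using Cn[of g c] g c by (simp add: grp_def)
    qed
    then have "C = {id} \<or> finite_index C G" using ji unfolding just_infinite_def by blast
    then have "fgen autgroup C"
    proof
      assume "C = {id}" then show ?thesis using fgen_triv by simp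
    next
      assume "finite_index C G"
      then have fin: "finite ((\<lambda>b. C #>\<^bsub>autgroup\<^esub> b) ` G)" unfolding finite_index_def rcosets_grp .
      show ?thesis using AG.schreier[OF Csub G CG fG fin] .
    qed
    then show "fgen autgroup (psi (xs!j) {e\<in>E. \<forall>i<j. section_at e (xs!i) = id})"
      unfolding C_def A_def x_def .
  qed
qed

theorem lemma3p5:
  fixes G L :: "('a::finite list \<Rightarrow> 'a list) set"
    and Y :: "'a list set"
  assumes "subgroup G autgroup"
    and "fin_gen G"
    and "just_infinite G"
    and "strongly_self_replicating G"
    and "congruence_subgroup_property G"
    and "leaf_set Y" and "spanning Y"
    and "subgroup L (grp G)"
    and "infra_direct G L Y"
  shows "fin_gen L"
proof -
  note G = assms(1)
  have fG: "fgen autgroup G" using assms(2) unfolding fin_gen_def fgen_def .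
  note ji = assms(3) and ssr = assms(4) and csp = assms(5)
  have Yfin: "finite Y" using assms(6) unfolding leaf_set_def by simp
  obtain N where N: "\<And>w. length w \<ge> N \<Longrightarrow> \<exists>y\<in>Y. prefix y w" using assms(7) unfolding spanning_def by auto
  have L: "subgroup L autgroup" and LG: "L \<subseteq> G" using sub_of_grp[OF G assms(8)] by auto
  note infra = assms(9)
  have sG: "\<And>g x. g \<in> G \<Longrightarrow> section_at g x \<in> G" using ssr unfolding strongly_self_replicating_def by auto
  have Gc: "\<And>g. g \<in> G \<Longrightarrow> is_aut g" using subgroup.subset[OF G] by auto
  define K where "K = stab_set L Y"
  have K: "subgroup K autgroup" unfolding K_def using stab_subgroup[OF L] .
  have KL: "K \<subseteq> L" unfolding K_def stab_set_def by auto
  have Kc: "\<And>e. e \<in> K \<Longrightarrow> is_aut e" using KL LG Gc by auto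
  obtain ys where ys: "set ys = Y" using finite_list[OF Yfin] by blast
  have fx: "\<And>e x. e \<in> K \<Longrightarrow> x \<in> set ys \<Longrightarrow> e x = x" using ys unfolding K_def stab_set_def by auto
  have "fgen autgroup K"
  proof (rule chain[of K ys])
    show "subgroup K autgroup" using K .
    show "\<And>e x. e \<in> K \<Longrightarrow> x \<in> set ys \<Longrightarrow> e x = x" using fx by blast
  next
    fix e assume e: "e \<in> K" and tr: "\<forall>x\<in>set ys. section_at e x = id"
    show "e = id"
    proof (rule aut_fix_long[OF Kc[OF e], of N])
      fix u :: "'a list" assume u: "N \<le> length u"
      obtain y where y: "y \<in> Y" "prefix y u" using N[OF u] by auto
      obtain w where w: "u = y @ w" using y(2) by (auto simp: prefix_def)
      have yy: "y \<in> set ys" using y ys by simp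
      have "e u = e y @ section_at e y w" using aut_append[OF Kc[OF e]] w by simp
      also have "\<dots> = u" using fx[OF e yy] tr yy w by simp
      finally show "e u = u" .
    qed
  next
    fix j assume j: "j < length ys"
    define A where "A = {e\<in>K. \<forall>i<j. section_at e (ys!i) = id}"
    define y where "y = ys!j"
    have y: "y \<in> set ys" using j y_def by auto
    have Asub: "subgroup A autgroup" unfolding A_def using A_sub[of K ys j] K fx j by simp
    have AK: "A \<subseteq> K" unfolding A_def by auto
    define C where "C = psi y A"
    have Csub: "subgroup C autgroup" unfolding C_def using psi_subgroup[OF Asub] fx y AK by auto
    have CG: "C \<subseteq> G" unfolding C_def psi_def using AK KL LG sG by blast
    define Hy where "Hy = psi y K"
    have Hy: "subgroup Hy (grp G)" "finite_index Hy G"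
      using infra y ys unfolding infra_direct_def Hy_def K_def by auto
    obtain n where n: "stab_level G n \<subseteq> Hy" using csp Hy unfolding congruence_subgroup_property_def by blast
    define m where "m = Suc n"
    define St where "St = stab_level G m"
    have StH: "St \<subseteq> Hy" using stab_level_mono[OF G, of n] n unfolding St_def m_def by auto
    have Stsub: "subgroup St autgroup" unfolding St_def stab_level_def using stab_subgroup[OF G] .
    have Cn: "h \<circ> c \<circ> ainv h \<in> C" if h: "h \<in> Hy" and c: "c \<in> C" for h c
    proof -
      obtain l where l: "l \<in> K" "section_at l y = h" using h unfolding Hy_def psi_def by auto
      obtain e where e: "e \<in> A" "c = section_at e y" using c unfolding C_def psi_def by auto
      have eK: "e \<in> K" using e AK by auto
      have la: "is_aut l" using Kc[OF l(1)] .
      have e'K: "l \<circ> e \<circ> ainv l \<in> K"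
        using subgroup.m_closed[OF K subgroup.m_closed[OF K l(1) eK] subgroup.m_inv_closed[OF K l(1)]] by simp
      have "section_at (l \<circ> e \<circ> ainv l) (ys!i) = id" if i: "i < j" for i
      proof -
        have yi: "ys!i \<in> set ys" using i j by auto
        have "section_at (l \<circ> e \<circ> ainv l) (ys!i) = section_at l (ys!i) \<circ> section_at e (ys!i) \<circ> ainv (section_at l (ys!i))"
          using conj_section[OF la Kc[OF eK] fx[OF l(1) yi] fx[OF eK yi]] .
        also have "\<dots> = section_at l (ys!i) \<circ> ainv (section_at l (ys!i))" using e(1) i unfolding A_def by simp
        also have "\<dots> = id" using ainv_r[OF section_aut[OF la]] by simp
        finally show ?thesis .
      qed
      then have e'A: "l \<circ> e \<circ> ainv l \<in> A" unfolding A_def using e'K by auto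
      have "section_at (l \<circ> e \<circ> ainv l) y = h \<circ> c \<circ> ainv h"
        using conj_section[OF la Kc[OF eK] fx[OF l(1) y] fx[OF eK y]] l(2) e(2) by simp
      then show ?thesis using e'A unfolding C_def psi_def by force
    qed
    define E' where "E' = C \<inter> St"
    have E'sub: "subgroup E' autgroup" unfolding E'_def using AG.subgroups_Inter_pair[OF Csub Stsub] .
    have "fgen autgroup E'"
    proof (rule key[OF G fG ji ssr])
      show "1 \<le> m" unfolding m_def by simp
      show "subgroup E' autgroup" using E'sub .
      show "E' \<subseteq> stab_level G m" unfolding E'_def St_def by auto
      fix s e assume s: "s \<in> stab_level G m" and e: "e \<in> E'"
      have sSt: "s \<in> St" using s St_def by simp
      have "s \<circ> e \<circ> ainv s \<in> C" using Cn[of s e] sSt StH e unfolding E'_def by auto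
      moreover have "s \<circ> e \<circ> ainv s \<in> St"
        using subgroup.m_closed[OF Stsub subgroup.m_closed[OF Stsub sSt] subgroup.m_inv_closed[OF Stsub sSt]] e
        unfolding E'_def by simp
      ultimately show "s \<circ> e \<circ> ainv s \<in> E'" unfolding E'_def by simp
    qed
    moreover have "finite ((\<lambda>c. E' #>\<^bsub>autgroup\<^esub> c) ` C)"
    proof -
      have "finite ((\<lambda>b. St #>\<^bsub>autgroup\<^esub> b) ` G)"
        unfolding St_def stab_level_def using stab_fin[OF G finite_level] .
      then have "finite ((\<lambda>c. (St \<inter> C) #>\<^bsub>autgroup\<^esub> c) ` C)"
        using AG.finite_index_Int[OF Stsub Csub CG] by blast
      moreover have "St \<inter> C = E'" unfolding E'_def by auto
      ultimately show ?thesis by simp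
    qed
    ultimately have "fgen autgroup C"
      using AG.fg_up[OF E'sub Csub _ _] unfolding E'_def by blast
    then show "fgen autgroup (psi (ys!j) {e\<in>K. \<forall>i<j. section_at e (ys!i) = id})"
      unfolding C_def A_def y_def .
  qed
  moreover have "finite ((\<lambda>b. K #>\<^bsub>autgroup\<^esub> b) ` L)"
    unfolding K_def using stab_fin[OF L Yfin] .
  ultimately have "fgen autgroup L" using AG.fg_up[OF K L KL] by blast
  then show ?thesis unfolding fin_gen_def fgen_def .
qed

end
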